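(* Let $\alpha$ be a proper fraction ($0<\alpha<1$) and let $u=(u_k)$ be a sequence with $u_k\neq 0$ for all $k\in\mathbb{N}$. Then the sequence space $c_0(\Gamma,\Delta^{(\alpha)},u)=\{x\in\omega:(\sum_{j=0}^k u_j\Delta^{(\alpha)}x_j)_{k}\in c_0\}$ is linearly isomorphic to $c_0$, and the sequence space $c(\Gamma,\Delta^{(\alpha)},u)=\{x\in\omega:(\sum_{j=0}^k u_j\Delta^{(\alpha)}x_j)_{k}\in c\}$ is linearly isomorphic to $c$.
   Context: $\omega$ denotes the space of all real or complex sequences, $c$ the space of convergent sequences and $c_0$ the space of null sequences; $\mathbb{N}=\{0,1,2,\dots\}$. For $x=(x_k)\in\omega$ the fractional difference operator is $\Delta^{(\alpha)}x_k=\sum_{i=0}^{\infty}(-1)^i\frac{\Gamma(\alpha+1)}{i!\,\Gamma(\alpha+1-i)}x_{k-i}$, where $\Gamma$ is the gamma function and $x_j=0$ for $j<0$. *)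

theory Defs
  imports "HOL-Analysis.Analysis"
begin

text \<open>Fractional difference operator; terms with negative index vanish, so the
  infinite sum reduces to the finite sum over i = 0..k.\<close>
definition frac_diff :: "real \<Rightarrow> (nat \<Rightarrow> 'a::{real_normed_field}) \<Rightarrow> nat \<Rightarrow> 'a" where
  "frac_diff \<alpha> x k =
     (\<Sum>i\<le>k. of_real ((-1) ^ i * Gamma (\<alpha> + 1) / (fact i * Gamma (\<alpha> + 1 - real i))) * x (k - i))"

definition gamma_transform :: "real \<Rightarrow> (nat \<Rightarrow> 'a::{real_normed_field}) \<Rightarrow> (nat \<Rightarrow> 'a) \<Rightarrow> nat \<Rightarrow> 'a" where
  "gamma_transform \<alpha> u x k = (\<Sum>j\<le>k. u j * frac_diff \<alpha> x j)"

definition null_seqs :: "(nat \<Rightarrow> 'a::real_normed_field) set" where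
  "null_seqs = {x. x \<longlonglongrightarrow> 0}"

definition conv_seqs :: "(nat \<Rightarrow> 'a::real_normed_field) set" where
  "conv_seqs = {x. convergent x}"

definition c0_Gamma :: "real \<Rightarrow> (nat \<Rightarrow> 'a::real_normed_field) \<Rightarrow> (nat \<Rightarrow> 'a) set" where
  "c0_Gamma \<alpha> u = {x. gamma_transform \<alpha> u x \<in> null_seqs}"

definition c_Gamma :: "real \<Rightarrow> (nat \<Rightarrow> 'a::real_normed_field) \<Rightarrow> (nat \<Rightarrow> 'a) set" where
  "c_Gamma \<alpha> u = {x. gamma_transform \<alpha> u x \<in> conv_seqs}"

definition lin_iso :: "(nat \<Rightarrow> 'a::field) set \<Rightarrow> (nat \<Rightarrow> 'a) set \<Rightarrow> bool" where
  "lin_iso S T \<longleftrightarrow> (\<exists>f. bij_betw f S T \<and>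
      (\<forall>x\<in>S. \<forall>y\<in>S. f (\<lambda>k. x k + y k) = (\<lambda>k. f x k + f y k)) \<and>
      (\<forall>c. \<forall>x\<in>S. f (\<lambda>k. c * x k) = (\<lambda>k. c * f x k)))"

end

theory Submission
  imports Defs
begin

fun inv_conv :: "(nat \<Rightarrow> 'a::field) \<Rightarrow> (nat \<Rightarrow> 'a) \<Rightarrow> nat \<Rightarrow> 'a" where
  "inv_conv a w k = w k - (\<Sum>i\<in>{1..k}. a i * inv_conv a w (k - i))"

declare inv_conv.simps[simp del]

definition fcoef :: "real \<Rightarrow> nat \<Rightarrow> 'a::real_normed_field" where
  "fcoef \<alpha> i = of_real ((-1) ^ i * Gamma (\<alpha> + 1) / (fact i * Gamma (\<alpha> + 1 - real i)))"

lemma fd_eq: "frac_diff \<alpha> x k = (\<Sum>i\<le>k. fcoef \<alpha> i * x (k - i))"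
  unfolding frac_diff_def fcoef_def by simp

lemma fcoef0: "\<alpha> > 0 \<Longrightarrow> fcoef \<alpha> 0 = 1"
proof -
  assume "\<alpha> > 0"
  hence "Gamma (\<alpha> + 1) \<noteq> 0" proof - have "Gamma (\<alpha> + 1) > 0" using \<open>\<alpha> > 0\<close> by (intro Gamma_real_pos) simp thus ?thesis by simp qed
  thus ?thesis unfolding fcoef_def by simp
qed

lemma sum_split0: "(\<Sum>i\<le>k. f i) = f 0 + (\<Sum>i\<in>{1..k}. f i)" for f :: "nat \<Rightarrow> 'a::comm_monoid_add"
proof -
  have "{..k} = insert 0 {1..k}" by auto
  thus ?thesis by simp
qed

lemma fd_split: "\<alpha> > 0 \<Longrightarrow> frac_diff \<alpha> x k = x k + (\<Sum>i\<in>{1..k}. fcoef \<alpha> i * x (k - i))"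
  unfolding fd_eq by (subst sum_split0) (simp add: fcoef0)

lemma gt0: "gamma_transform \<alpha> u x 0 = u 0 * frac_diff \<alpha> x 0"
  unfolding gamma_transform_def by simp

lemma gtS: "gamma_transform \<alpha> u x (Suc k) = gamma_transform \<alpha> u x k + u (Suc k) * frac_diff \<alpha> x (Suc k)"
  unfolding gamma_transform_def by simp

lemma fd_local:
  assumes "\<forall>i\<le>k. x i = y i"
  shows "frac_diff \<alpha> x k = frac_diff \<alpha> y k"
  unfolding fd_eq using assms by (intro sum.cong) auto

lemma fd_inj:
  assumes a: "\<alpha> > 0" and h: "\<And>j. frac_diff \<alpha> x j = frac_diff \<alpha> y j"
  shows "x k = y k"
proof (induction k rule: less_induct)
  case (less k)
  have "(\<Sum>i\<in>{1..k}. fcoef \<alpha> i * x (k - i)) = (\<Sum>i\<in>{1..k}. fcoef \<alpha> i * y (k - i))"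
    using less by (intro sum.cong) auto
  thus ?case using h[of k] fd_split[OF a, of x k] fd_split[OF a, of y k] by simp
qed

lemma gt_inj:
  assumes a: "\<alpha> > 0" and u: "\<And>k. u k \<noteq> 0"
    and h: "gamma_transform \<alpha> u x = gamma_transform \<alpha> u y"
  shows "x = y"
proof -
  have "frac_diff \<alpha> x j = frac_diff \<alpha> y j" for j
  proof (cases j)
    case 0
    then show ?thesis using fun_cong[OF h, of 0] u[of 0] by (simp add: gt0)
  next
    case (Suc k)
    then show ?thesis using fun_cong[OF h, of k] fun_cong[OF h, of "Suc k"] u[of "Suc k"]
      by (simp add: gtS)
  qed
  thus ?thesis using fd_inj[OF a] by blast
qed

lemma fd_surj:
  assumes a: "\<alpha> > 0"
  shows "frac_diff \<alpha> (inv_conv (fcoef \<alpha>) w) k = w k"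
  by (subst fd_split[OF a]) (subst inv_conv.simps, simp)

lemma gt_surj:
  assumes a: "\<alpha> > 0" and u: "\<And>k. u k \<noteq> 0"
  shows "\<exists>x. gamma_transform \<alpha> u x = y"
proof -
  define w where "w k = (if k = 0 then y 0 / u 0 else (y k - y (k - 1)) / u k)" for k
  define x where "x = inv_conv (fcoef \<alpha>) w"
  have "gamma_transform \<alpha> u x k = y k" for k
  proof (induction k)
    case 0 thus ?case using u[of 0] by (simp add: gt0 x_def fd_surj[OF a] w_def)
  next
    case (Suc k) thus ?case using u[of "Suc k"] by (simp add: gtS x_def fd_surj[OF a] w_def)
  qed
  thus ?thesis by blast
qed

lemma gt_add: "gamma_transform \<alpha> u (\<lambda>k. x k + y k) = (\<lambda>k. gamma_transform \<alpha> u x k + gamma_transform \<alpha> u y k)"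
  unfolding gamma_transform_def fd_eq by (simp add: algebra_simps sum.distrib)

lemma gt_scale: "gamma_transform \<alpha> u (\<lambda>k. c * x k) = (\<lambda>k. c * gamma_transform \<alpha> u x k)"
  unfolding gamma_transform_def fd_eq by (simp add: algebra_simps sum_distrib_left)

lemma iso_gen:
  assumes a: "\<alpha> > 0" and u: "\<And>k. u k \<noteq> 0"
  shows "lin_iso {x. gamma_transform \<alpha> u x \<in> S} S"
  unfolding lin_iso_def
proof (intro exI[of _ "gamma_transform \<alpha> u"] conjI ballI allI)
  show "bij_betw (gamma_transform \<alpha> u) {x. gamma_transform \<alpha> u x \<in> S} S"
    unfolding bij_betw_def
  proof
    show "inj_on (gamma_transform \<alpha> u) {x. gamma_transform \<alpha> u x \<in> S}"
      using gt_inj[OF a, of u] u by (auto simp: inj_on_def)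
    show "gamma_transform \<alpha> u ` {x. gamma_transform \<alpha> u x \<in> S} = S"
    proof
      show "S \<subseteq> gamma_transform \<alpha> u ` {x. gamma_transform \<alpha> u x \<in> S}"
      proof
        fix y assume "y \<in> S"
        obtain x where "gamma_transform \<alpha> u x = y" using gt_surj[OF a, of u] u by blast
        thus "y \<in> gamma_transform \<alpha> u ` {x. gamma_transform \<alpha> u x \<in> S}" using \<open>y \<in> S\<close> by auto
      qed
    qed auto
  qed
qed (simp_all add: gt_add gt_scale)

theorem theorem2:
  fixes \<alpha> :: real and u :: "nat \<Rightarrow> 'a::real_normed_field"
  assumes "0 < \<alpha>" and "\<alpha> < 1"
    and "\<And>k. u k \<noteq> 0"
  shows "lin_iso (c0_Gamma \<alpha> u) null_seqs \<and> lin_iso (c_Gamma \<alpha> u) conv_seqs"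
  unfolding c0_Gamma_def c_Gamma_def using iso_gen[OF assms(1), of u] assms(3) by blast

end
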